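(* Let $(G,X,\Gamma)$ be a $(\mu,\nu)$-path system group, let $\eta\ge0$ and let $(g,A)$ be an $\eta$-quasi-convex element of $G$. There exists $\theta=\theta(\eta,g,A)\ge1$ such that for every $a\in A$ the orbit map $\mathbb Z\to X$, $m\mapsto g^ma$, is a $(\theta,0)$-quasi-isometric embedding, i.e. $\frac1\theta|m-n|\le d(g^ma,g^na)\le\theta|m-n|$ for all $m,n\in\mathbb Z$. Moreover $[g]^\infty>0$.
   Context: A path is a rectifiable continuous map $\alpha\colon[a,b]\to X$ parametrised by arc length; it is a $(\kappa,\lambda)$-quasi-geodesic if $d(\alpha(t),\alpha(t'))\le|t-t'|\le\kappa d(\alpha(t),\alpha(t'))+\lambda$. A $(\mu,\nu)$-path system group $(G,X,\Gamma)$ is a group $G$ acting properly by isometries on a geodesic metric space $X$ together with a $G$-invariant collection $\Gamma$ of paths closed under subpaths, such that any two points are joined by an element of $\Gamma$ and every element is a $(\mu,\nu)$-quasi-geodesic. A subset $Y$ is $\eta$-quasi-convex if every $\gamma\in\Gamma$ with endpoints in $Y$ lies in the closed $\eta$-neighbourhood of $Y$. An element $g$ is $\eta$-quasi-convex, written $(g,A)$, if $g$ has infinite order and $A\subseteq X$ is a $\langle g\rangle$-invariant $\eta$-quasi-convex subset on which $\langle g\rangle$ acts $\eta$-coboundedly (for all $a,a'\in A$ some $k\in\langle g\rangle$ has $d(a,ka')\le\eta$). The asymptotic translation length is $[g]^\infty=\limsup_{m\to\infty}\frac1m d(o,g^mo)$ for any $o\in X$. *)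

theory Defs
  imports "HOL-Analysis.Analysis" "HOL-Algebra.Group_Action"
begin

text \<open>A path is represented as a triple (a, b, alpha) with alpha restricted to the
  parameter interval [a,b].\<close>

type_synonym 'x rpath = "real \<times> real \<times> (real \<Rightarrow> 'x)"

definition geodesic_space :: "'x::metric_space itself \<Rightarrow> bool" where
  "geodesic_space _ \<longleftrightarrow> (\<forall>x y::'x. \<exists>\<gamma>::real \<Rightarrow> 'x. \<gamma> 0 = x \<and> \<gamma> (dist x y) = y \<and>
      (\<forall>s\<in>{0..dist x y}. \<forall>t\<in>{0..dist x y}. dist (\<gamma> s) (\<gamma> t) = \<bar>s - t\<bar>))"

definition partition_sums :: "(real \<Rightarrow> 'x::metric_space) \<Rightarrow> real \<Rightarrow> real \<Rightarrow> real set" where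
  "partition_sums \<alpha> s t = {(\<Sum>i<n. dist (\<alpha> (p i)) (\<alpha> (p (Suc i)))) | n p.
      p 0 = s \<and> p n = t \<and> (\<forall>i<n. p i \<le> p (Suc i))}"

definition arc_length_path :: "'x::metric_space rpath \<Rightarrow> bool" where
  "arc_length_path P \<longleftrightarrow> (case P of (a, b, \<alpha>) \<Rightarrow> a \<le> b \<and> continuous_on {a..b} \<alpha> \<and>
     (\<forall>s t. a \<le> s \<and> s \<le> t \<and> t \<le> b \<longrightarrow>
        bdd_above (partition_sums \<alpha> s t) \<and> Sup (partition_sums \<alpha> s t) = t - s))"

definition quasi_geodesic :: "real \<Rightarrow> real \<Rightarrow> 'x::metric_space rpath \<Rightarrow> bool" where
  "quasi_geodesic \<kappa> lam P \<longleftrightarrow> arc_length_path P \<and> (case P of (a, b, \<alpha>) \<Rightarrow>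
     (\<forall>t\<in>{a..b}. \<forall>t'\<in>{a..b}. dist (\<alpha> t) (\<alpha> t') \<le> \<bar>t - t'\<bar> \<and>
        \<bar>t - t'\<bar> \<le> \<kappa> * dist (\<alpha> t) (\<alpha> t') + lam))"

definition path_system_group ::
  "real \<Rightarrow> real \<Rightarrow> ('g, 'm) monoid_scheme \<Rightarrow> ('g \<Rightarrow> 'x::metric_space \<Rightarrow> 'x) \<Rightarrow> 'x rpath set \<Rightarrow> bool" where
  "path_system_group \<mu> \<nu> G \<phi> \<Gamma> \<longleftrightarrow>
     group G \<and> group_action G UNIV \<phi> \<and> geodesic_space TYPE('x) \<and>
     (\<forall>g\<in>carrier G. \<forall>x y. dist (\<phi> g x) (\<phi> g y) = dist x y) \<and>
     (\<forall>x r. finite {g \<in> carrier G. dist x (\<phi> g x) \<le> r}) \<and>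
     (\<forall>g\<in>carrier G. \<forall>(a, b, \<alpha>)\<in>\<Gamma>. (a, b, \<phi> g \<circ> \<alpha>) \<in> \<Gamma>) \<and>
     (\<forall>(a, b, \<alpha>)\<in>\<Gamma>. \<forall>c d. a \<le> c \<and> c \<le> d \<and> d \<le> b \<longrightarrow> (c, d, \<alpha>) \<in> \<Gamma>) \<and>
     (\<forall>x y. \<exists>(a, b, \<alpha>)\<in>\<Gamma>. \<alpha> a = x \<and> \<alpha> b = y) \<and>
     (\<forall>P\<in>\<Gamma>. quasi_geodesic \<mu> \<nu> P)"

definition quasi_convex_set :: "'x::metric_space rpath set \<Rightarrow> real \<Rightarrow> 'x set \<Rightarrow> bool" where
  "quasi_convex_set \<Gamma> \<eta> Y \<longleftrightarrow>
     (\<forall>(a, b, \<alpha>)\<in>\<Gamma>. \<alpha> a \<in> Y \<and> \<alpha> b \<in> Y \<longrightarrow> (\<forall>t\<in>{a..b}. infdist (\<alpha> t) Y \<le> \<eta>))"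

definition quasi_convex_elem ::
  "('g, 'm) monoid_scheme \<Rightarrow> ('g \<Rightarrow> 'x::metric_space \<Rightarrow> 'x) \<Rightarrow> 'x rpath set \<Rightarrow> real \<Rightarrow> 'g \<Rightarrow> 'x set \<Rightarrow> bool" where
  "quasi_convex_elem G \<phi> \<Gamma> \<eta> g A \<longleftrightarrow>
     g \<in> carrier G \<and> (\<forall>n::nat. n > 0 \<longrightarrow> g [^]\<^bsub>G\<^esub> n \<noteq> \<one>\<^bsub>G\<^esub>) \<and>
     A \<noteq> {} \<and>
     (\<forall>k::int. \<phi> (g [^]\<^bsub>G\<^esub> k) ` A \<subseteq> A) \<and>
     quasi_convex_set \<Gamma> \<eta> A \<and>
     (\<forall>a\<in>A. \<forall>a'\<in>A. \<exists>k::int. dist a (\<phi> (g [^]\<^bsub>G\<^esub> k) a') \<le> \<eta>)"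

definition asymp_trans_len ::
  "('g, 'm) monoid_scheme \<Rightarrow> ('g \<Rightarrow> 'x::metric_space \<Rightarrow> 'x) \<Rightarrow> 'g \<Rightarrow> 'x \<Rightarrow> ereal" where
  "asymp_trans_len G \<phi> g x0 = limsup (\<lambda>m::nat. ereal (dist x0 (\<phi> (g [^]\<^bsub>G\<^esub> m) x0) / real m))"

end

theory Submission
  imports Defs
begin

locale QCsetup =
  fixes G :: "('g, 'm) monoid_scheme" and \<phi> :: "'g \<Rightarrow> 'x::metric_space \<Rightarrow> 'x"
    and \<Gamma> :: "'x rpath set" and \<mu> \<nu> \<eta> :: real and g :: 'g and A :: "'x set"
  assumes PS: "path_system_group \<mu> \<nu> G \<phi> \<Gamma>" and eta: "\<eta> \<ge> 0"
    and QC: "quasi_convex_elem G \<phi> \<Gamma> \<eta> g A"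
begin

definition P :: "int \<Rightarrow> 'x \<Rightarrow> 'x" where "P k = \<phi> (g [^]\<^bsub>G\<^esub> k)"

lemma grp: "group G" using PS unfolding path_system_group_def by blast
lemma act: "group_action G UNIV \<phi>" using PS unfolding path_system_group_def by blast
lemma gc: "g \<in> carrier G" using QC unfolding quasi_convex_elem_def by blast
lemma isom: "h \<in> carrier G \<Longrightarrow> dist (\<phi> h x) (\<phi> h y) = dist x y"
  using PS unfolding path_system_group_def by blast
lemma proper: "finite {h \<in> carrier G. dist x (\<phi> h x) \<le> r}"
  using PS unfolding path_system_group_def by blast
lemma inf_ord: "0 < n \<Longrightarrow> g [^]\<^bsub>G\<^esub> (n::nat) \<noteq> \<one>\<^bsub>G\<^esub>"
  using QC unfolding quasi_convex_elem_def by blast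
lemma Ane: "A \<noteq> {}" using QC unfolding quasi_convex_elem_def by blast
lemma Ainv: "a \<in> A \<Longrightarrow> P k a \<in> A" using QC unfolding quasi_convex_elem_def P_def by blast
lemma qcs: "quasi_convex_set \<Gamma> \<eta> A" using QC unfolding quasi_convex_elem_def by blast
lemma cob: "a \<in> A \<Longrightarrow> a' \<in> A \<Longrightarrow> \<exists>k. dist a (P k a') \<le> \<eta>"
  using QC unfolding quasi_convex_elem_def P_def by blast

lemma powc: "g [^]\<^bsub>G\<^esub> (k::int) \<in> carrier G"
  using group.int_pow_closed[OF grp gc] by blast

lemma P_add: "P i (P j x) = P (i+j) x"
  unfolding P_def
  using group.int_pow_mult[OF grp gc, of i j] group_action.composition_rule[OF act, of x]
    powc by simp

lemma P0: "P 0 x = x"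
proof -
  have "(\<lambda>x\<in>UNIV. x) = \<phi> \<one>\<^bsub>G\<^esub>" using group_action.id_eq_one[OF act] .
  then have "\<phi> \<one>\<^bsub>G\<^esub> x = x" by (metis UNIV_I restrict_apply')
  then show ?thesis unfolding P_def by simp
qed

lemma P_dist: "dist (P k x) (P k y) = dist x y"
  unfolding P_def using isom powc by blast

lemma P_dist2: "dist (P m x) (P n x) = dist x (P (n - m) x)"
proof -
  have "P n x = P m (P (n - m) x)" using P_add[of m "n-m" x] by simp
  then show ?thesis using P_dist by simp
qed

lemma pow_one: "g [^]\<^bsub>G\<^esub> (k::int) = \<one>\<^bsub>G\<^esub> \<Longrightarrow> k = 0"
proof (rule ccontr)
  assume h: "g [^]\<^bsub>G\<^esub> k = \<one>\<^bsub>G\<^esub>" "k \<noteq> 0"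
  show False
  proof (cases "k > 0")
    case True
    then have "g [^]\<^bsub>G\<^esub> (nat k) = \<one>\<^bsub>G\<^esub>" using h int_pow_int[of G g "nat k"] by simp
    then show False using inf_ord[of "nat k"] True by linarith
  next
    case False
    then have k: "k = - int (nat (-k))" "nat (-k) > 0" using h by auto
    have "inv\<^bsub>G\<^esub> (g [^]\<^bsub>G\<^esub> (nat (-k))) = \<one>\<^bsub>G\<^esub>"
      using h group.int_pow_neg_int[OF grp gc, of "nat (-k)"] k by simp
    then have "g [^]\<^bsub>G\<^esub> (nat (-k)) = \<one>\<^bsub>G\<^esub>"
      by (metis gc grp group.inv_eq_1_iff monoid.nat_pow_closed group.is_monoid)
    then show False using inf_ord[of "nat (-k)"] k(2) by blast
  qed
qed

lemma pow_inj: "g [^]\<^bsub>G\<^esub> (i::int) = g [^]\<^bsub>G\<^esub> j \<Longrightarrow> i = j"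
proof -
  assume h: "g [^]\<^bsub>G\<^esub> i = g [^]\<^bsub>G\<^esub> j"
  have "g [^]\<^bsub>G\<^esub> (i - j) = g [^]\<^bsub>G\<^esub> i \<otimes>\<^bsub>G\<^esub> inv\<^bsub>G\<^esub> (g [^]\<^bsub>G\<^esub> j)"
    using group.int_pow_diff[OF grp gc] by blast
  also have "\<dots> = \<one>\<^bsub>G\<^esub>" using h powc group.r_inv[OF grp] by metis
  finally show ?thesis using pow_one by fastforce
qed

lemma finJ: "finite {j::int. dist x (P j x) \<le> r}"
proof -
  let ?S = "{j::int. dist x (P j x) \<le> r}"
  have "(\<lambda>j. g [^]\<^bsub>G\<^esub> j) ` ?S \<subseteq> {h \<in> carrier G. dist x (\<phi> h x) \<le> r}"
    using powc unfolding P_def by auto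
  then have "finite ((\<lambda>j. g [^]\<^bsub>G\<^esub> j) ` ?S)" using proper finite_subset by blast
  moreover have "inj_on (\<lambda>j. g [^]\<^bsub>G\<^esub> (j::int)) ?S" using pow_inj by (auto simp: inj_on_def)
  ultimately show ?thesis using finite_imageD by blast
qed

lemma boundJ: "\<exists>K::real. K \<ge> 0 \<and> (\<forall>j. dist x (P j x) \<le> r \<longrightarrow> \<bar>real_of_int j\<bar> \<le> K)"
proof -
  let ?S = "{j::int. dist x (P j x) \<le> r}"
  define M where "M = Max (insert 0 (abs ` ?S))"
  have fin: "finite (insert 0 (abs ` ?S))" using finJ by simp
  have "M \<ge> 0" unfolding M_def using fin by simp
  moreover have "\<forall>j. dist x (P j x) \<le> r \<longrightarrow> \<bar>j\<bar> \<le> M" unfolding M_def using fin by simp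
  ultimately show ?thesis by (intro exI[of _ "real_of_int M"]) auto
qed


definition a0 :: 'x where "a0 = (SOME a. a \<in> A)"
lemma a0A: "a0 \<in> A" unfolding a0_def using Ane by (simp add: some_in_eq)

definition K :: real where
  "K = (SOME K. K \<ge> 0 \<and> (\<forall>j. dist a0 (P j a0) \<le> 4*\<eta>+3 \<longrightarrow> \<bar>real_of_int j\<bar> \<le> K))"
lemma K_prop: "K \<ge> 0" "dist a0 (P j a0) \<le> 4*\<eta>+3 \<Longrightarrow> \<bar>real_of_int j\<bar> \<le> K"
  using someI_ex[OF boundJ[of a0 "4*\<eta>+3"]] unfolding K_def by blast+

lemma near: assumes "infdist y A \<le> \<eta>" shows "\<exists>k. dist y (P k a0) \<le> 2*\<eta>+1"
proof -
  have "Inf ((\<lambda>a. dist y a) ` A) < \<eta> + 1" using assms infdist_notempty[OF Ane] by simp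
  then obtain z where z: "z \<in> A" "dist y z < \<eta>+1"
    using cInf_lessD[of "(\<lambda>a. dist y a) ` A"] Ane by auto
  obtain k where "dist z (P k a0) \<le> \<eta>" using cob[OF z(1) a0A] by blast
  then have "dist y (P k a0) \<le> 2*\<eta>+1" using dist_triangle[of y "P k a0" z] z(2) by linarith
  then show ?thesis by blast
qed

lemma step_bound: assumes "dist (P i a0) (P j a0) \<le> 4*\<eta>+3" shows "\<bar>real_of_int j - real_of_int i\<bar> \<le> K"
  using K_prop(2)[of "j - i"] assms P_dist2[of i a0 j] by simp

lemma chain:
  assumes path: "(s,t,\<alpha>) \<in> \<Gamma>" and as: "\<alpha> s \<in> A" and at: "\<alpha> t = P m (\<alpha> s)"
  shows "\<bar>real_of_int m\<bar> \<le> K * (t - s + 3)"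
proof -
  have qg: "quasi_geodesic \<mu> \<nu> (s,t,\<alpha>)" using PS path unfolding path_system_group_def by blast
  then have st: "s \<le> t" unfolding quasi_geodesic_def arc_length_path_def by simp
  have lip: "\<And>u v. u \<in> {s..t} \<Longrightarrow> v \<in> {s..t} \<Longrightarrow> dist (\<alpha> u) (\<alpha> v) \<le> \<bar>u - v\<bar>"
    using qg unfolding quasi_geodesic_def by auto
  have atA: "\<alpha> t \<in> A" using at Ainv as by simp
  have inf: "\<And>u. u \<in> {s..t} \<Longrightarrow> infdist (\<alpha> u) A \<le> \<eta>"
    using qcs path as atA unfolding quasi_convex_set_def by fastforce
  define kk where "kk u = (SOME k. dist (\<alpha> u) (P k a0) \<le> 2*\<eta>+1)" for u
  have kk: "\<And>u. u \<in> {s..t} \<Longrightarrow> dist (\<alpha> u) (P (kk u) a0) \<le> 2*\<eta>+1"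
    unfolding kk_def using near inf by (meson someI_ex)
  define N :: nat where "N = nat \<lceil>t - s\<rceil> + 1"
  have Npos: "real N > 0" unfolding N_def by simp
  have Nge: "t - s \<le> real N" unfolding N_def using st by linarith
  have Nle: "real N \<le> t - s + 2" unfolding N_def using st by linarith
  define \<tau> where "\<tau> i = s + real i * (t - s) / real N" for i
  have \<tau>in: "\<tau> i \<in> {s..t}" if "i \<le> N" for i
  proof -
    have "real i * (t - s) / real N \<le> t - s"
      using that st Npos by (simp add: divide_le_eq mult_right_mono mult.commute)
    moreover have "0 \<le> real i * (t - s) / real N" using st Npos by simp
    ultimately show ?thesis unfolding \<tau>_def by simp
  qed
  have \<tau>step: "\<bar>\<tau> (Suc i) - \<tau> i\<bar> \<le> 1" for i
  proof -
    have "\<tau> (Suc i) - \<tau> i = (t - s) / real N" unfolding \<tau>_def using Npos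
      by (simp add: field_simps)
    moreover have "(t - s) / real N \<le> 1" using Nge Npos by (simp add: divide_le_eq)
    moreover have "0 \<le> (t - s) / real N" using st Npos by simp
    ultimately show ?thesis by simp
  qed
  have \<tau>0: "\<tau> 0 = s" unfolding \<tau>_def by simp
  have \<tau>N: "\<tau> N = t" unfolding \<tau>_def using Npos by simp
  have stepk: "\<bar>real_of_int (kk (\<tau> (Suc i))) - real_of_int (kk (\<tau> i))\<bar> \<le> K" if "i < N" for i
  proof (rule step_bound)
    have i1: "\<tau> i \<in> {s..t}" "\<tau> (Suc i) \<in> {s..t}" using \<tau>in that by auto
    have "dist (\<alpha> (\<tau> i)) (\<alpha> (\<tau> (Suc i))) \<le> 1" using lip[OF i1] \<tau>step[of i] by simp
    moreover have "dist (\<alpha> (\<tau> i)) (P (kk (\<tau> i)) a0) \<le> 2*\<eta>+1" using kk i1 by blast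
    moreover have "dist (\<alpha> (\<tau> (Suc i))) (P (kk (\<tau> (Suc i))) a0) \<le> 2*\<eta>+1" using kk i1 by blast
    ultimately show "dist (P (kk (\<tau> i)) a0) (P (kk (\<tau> (Suc i))) a0) \<le> 4*\<eta>+3"
      using dist_triangle[of "P (kk (\<tau> i)) a0" "\<alpha> (\<tau> (Suc i))" "\<alpha> (\<tau> i)"]
        dist_triangle[of "P (kk (\<tau> i)) a0" "P (kk (\<tau> (Suc i))) a0" "\<alpha> (\<tau> (Suc i))"]
      by (simp add: dist_commute)
  qed
  have ind: "i \<le> N \<Longrightarrow> \<bar>real_of_int (kk (\<tau> i)) - real_of_int (kk (\<tau> 0))\<bar> \<le> real i * K" for i
  proof (induction i)
    case 0 then show ?case by simp
  next
    case (Suc i)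
    then have "\<bar>real_of_int (kk (\<tau> i)) - real_of_int (kk (\<tau> 0))\<bar> \<le> real i * K" by simp
    moreover have "\<bar>real_of_int (kk (\<tau> (Suc i))) - real_of_int (kk (\<tau> i))\<bar> \<le> K"
      using stepk Suc.prems by simp
    ultimately show ?case by (simp add: algebra_simps)
  qed
  define k0 where "k0 = kk s"
  define kN where "kN = kk t"
  have hN: "\<bar>real_of_int kN - real_of_int k0\<bar> \<le> real N * K"
    using ind[of N] \<tau>0 \<tau>N unfolding k0_def kN_def by simp
  have e0: "dist (\<alpha> s) (P k0 a0) \<le> 2*\<eta>+1" using kk[of s] st unfolding k0_def by simp
  have eN: "dist (\<alpha> t) (P kN a0) \<le> 2*\<eta>+1" using kk[of t] st unfolding kN_def by simp
  have "dist (\<alpha> t) (P (m + k0) a0) \<le> 2*\<eta>+1"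
    using e0 P_dist[of m "\<alpha> s" "P k0 a0"] P_add[of m k0 a0] at by simp
  then have "dist (P (m + k0) a0) (P kN a0) \<le> 4*\<eta>+3"
    using eN dist_triangle[of "P (m + k0) a0" "P kN a0" "\<alpha> t"] by (simp add: dist_commute)
  then have "\<bar>real_of_int kN - real_of_int (m + k0)\<bar> \<le> K" using step_bound by blast
  then have "\<bar>real_of_int m\<bar> \<le> K + real N * K" using hN by simp
  also have "\<dots> \<le> K + (t - s + 2) * K" using Nle K_prop(1) mult_right_mono by simp
  finally show ?thesis by (simp add: algebra_simps)
qed


lemma coarse: assumes a: "a \<in> A"
  shows "\<bar>real_of_int m\<bar> \<le> K * \<bar>\<mu>\<bar> * dist a (P m a) + K * (\<bar>\<nu>\<bar> + 3)"
proof -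
  have "\<exists>(s, t, \<alpha>)\<in>\<Gamma>. \<alpha> s = a \<and> \<alpha> t = P m a"
    using PS unfolding path_system_group_def by blast
  then obtain s t \<alpha> where path: "(s,t,\<alpha>) \<in> \<Gamma>" "\<alpha> s = a" "\<alpha> t = P m a" by blast
  have qg: "quasi_geodesic \<mu> \<nu> (s,t,\<alpha>)" using PS path unfolding path_system_group_def by blast
  then have st: "s \<le> t" unfolding quasi_geodesic_def arc_length_path_def by simp
  have "\<bar>s - t\<bar> \<le> \<mu> * dist (\<alpha> s) (\<alpha> t) + \<nu>"
    using qg st unfolding quasi_geodesic_def by fastforce
  also have "\<dots> \<le> \<bar>\<mu>\<bar> * dist (\<alpha> s) (\<alpha> t) + \<bar>\<nu>\<bar>"
    by (intro add_mono mult_right_mono) auto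
  finally have ts: "t - s \<le> \<bar>\<mu>\<bar> * dist a (P m a) + \<bar>\<nu>\<bar>" using path by simp
  have "\<bar>real_of_int m\<bar> \<le> K * (t - s + 3)" using chain[OF path(1)] path a by simp
  also have "\<dots> \<le> K * (\<bar>\<mu>\<bar> * dist a (P m a) + \<bar>\<nu>\<bar> + 3)"
    using ts K_prop(1) by (intro mult_left_mono) auto
  finally show ?thesis by (simp add: algebra_simps)
qed

lemma mult_dist: "dist x (P (int M * m) x) \<le> real M * dist x (P m x)"
proof (induction M)
  case 0 then show ?case by (simp add: P0)
next
  case (Suc M)
  have "dist x (P (int (Suc M) * m) x) \<le> dist x (P m x) + dist (P m x) (P (int (Suc M) * m) x)"
    by (rule dist_triangle)
  also have "dist (P m x) (P (int (Suc M) * m) x) = dist x (P (int M * m) x)"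
    using P_dist2[of m x "int (Suc M) * m"] by (simp add: algebra_simps)
  finally show ?case using Suc.IH by (simp add: algebra_simps)
qed

definition C :: real where "C = K * \<bar>\<mu>\<bar>"

lemma C_nonneg: "C \<ge> 0" unfolding C_def using K_prop(1) by simp

lemma lower: assumes a: "a \<in> A" shows "\<bar>real_of_int m\<bar> \<le> C * dist a (P m a)"
proof (rule ccontr)
  assume "\<not> ?thesis"
  then have gap: "\<bar>real_of_int m\<bar> - C * dist a (P m a) > 0" by simp
  define B where "B = K * (\<bar>\<nu>\<bar> + 3)"
  obtain M :: nat where M: "real M > B / (\<bar>real_of_int m\<bar> - C * dist a (P m a))"
    using reals_Archimedean2 by blast
  have "\<bar>real_of_int (int M * m)\<bar> \<le> C * dist a (P (int M * m) a) + B"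
    using coarse[OF a, of "int M * m"] unfolding C_def B_def by simp
  also have "\<dots> \<le> C * (real M * dist a (P m a)) + B"
    using mult_dist C_nonneg by (simp add: mult_left_mono)
  finally have "real M * \<bar>real_of_int m\<bar> \<le> C * (real M * dist a (P m a)) + B"
    by (simp add: abs_mult)
  then have "real M * (\<bar>real_of_int m\<bar> - C * dist a (P m a)) \<le> B" by (simp add: algebra_simps)
  moreover have "B < real M * (\<bar>real_of_int m\<bar> - C * dist a (P m a))"
    using M gap by (simp add: divide_less_eq)
  ultimately show False by simp
qed

definition D :: real where "D = 2*\<eta> + dist a0 (P 1 a0)"

lemma D_nonneg: "D \<ge> 0" unfolding D_def using eta by simp

lemma upper1: assumes a: "a \<in> A" shows "dist a (P 1 a) \<le> D"
proof -
  obtain k where k: "dist a (P k a0) \<le> \<eta>" using cob[OF a a0A] by blast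
  have "dist a (P 1 a) \<le> dist a (P k a0) + dist (P k a0) (P 1 a)" by (rule dist_triangle)
  also have "dist (P k a0) (P 1 a) \<le> dist (P k a0) (P (k+1) a0) + dist (P (k+1) a0) (P 1 a)"
    by (rule dist_triangle)
  also have "dist (P k a0) (P (k+1) a0) = dist a0 (P 1 a0)" using P_dist2[of k a0 "k+1"] by simp
  also have "dist (P (k+1) a0) (P 1 a) = dist (P k a0) a"
    using P_dist[of 1 "P k a0" a] P_add[of 1 k a0] by (simp add: add.commute)
  finally show ?thesis using k unfolding D_def by (simp add: dist_commute)
qed

lemma upper_nat: assumes a: "a \<in> A" shows "dist a (P (int n) a) \<le> real n * D"
proof (induction n)
  case 0 then show ?case by (simp add: P0)
next
  case (Suc n)
  have "dist a (P (int (Suc n)) a) \<le> dist a (P (int n) a) + dist (P (int n) a) (P (int (Suc n)) a)"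
    by (rule dist_triangle)
  also have "dist (P (int n) a) (P (int (Suc n)) a) = dist a (P 1 a)"
    using P_dist2[of "int n" a "int (Suc n)"] by simp
  finally show ?case using Suc.IH upper1[OF a] by (simp add: algebra_simps)
qed

lemma upper: assumes a: "a \<in> A" shows "dist a (P n a) \<le> D * \<bar>real_of_int n\<bar>"
proof (cases "n \<ge> 0")
  case True
  then show ?thesis using upper_nat[OF a, of "nat n"] by (simp add: mult.commute)
next
  case False
  have "dist a (P n a) = dist (P (-n) a) (P 0 a)" using P_dist2[of "-n" a 0] by (simp add: dist_commute)
  also have "\<dots> = dist a (P (-n) a)" using P0 by (simp add: dist_commute)
  finally show ?thesis using upper_nat[OF a, of "nat (-n)"] False by (simp add: mult.commute)
qed



definition th :: real where "th = max 1 (max C D)"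

lemma th_ge: "th \<ge> 1" "th \<ge> C" "th \<ge> D" unfolding th_def by auto

lemma part1: assumes a: "a \<in> A"
  shows "\<bar>real_of_int (m - n)\<bar> / th \<le> dist (P m a) (P n a) \<and>
         dist (P m a) (P n a) \<le> th * \<bar>real_of_int (m - n)\<bar>"
proof -
  have eq: "dist (P m a) (P n a) = dist a (P (n - m) a)" by (rule P_dist2)
  have ab: "\<bar>real_of_int (m - n)\<bar> = \<bar>real_of_int (n - m)\<bar>" by simp
  have "\<bar>real_of_int (n - m)\<bar> \<le> C * dist a (P (n - m) a)" using lower[OF a] .
  also have "\<dots> \<le> th * dist a (P (n - m) a)" using th_ge by (simp add: mult_right_mono)
  finally have l: "\<bar>real_of_int (m - n)\<bar> / th \<le> dist (P m a) (P n a)"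
    using th_ge(1) eq ab by (simp add: divide_le_eq mult.commute)
  have "dist a (P (n - m) a) \<le> D * \<bar>real_of_int (n - m)\<bar>" using upper[OF a] .
  also have "\<dots> \<le> th * \<bar>real_of_int (n - m)\<bar>" using th_ge by (simp add: mult_right_mono)
  finally show ?thesis using l eq ab by simp
qed

lemma part2: "asymp_trans_len G \<phi> g x0 > 0"
proof -
  define c where "c = dist x0 a0"
  have ev: "\<forall>\<^sub>F m in sequentially. ereal (1 / (2*th)) \<le> ereal (dist x0 (\<phi> (g [^]\<^bsub>G\<^esub> m) x0) / real m)"
    unfolding eventually_sequentially
  proof (intro exI[of _ "nat \<lceil>4*c*th\<rceil> + 1"] allI impI)
    fix m :: nat assume hm: "nat \<lceil>4*c*th\<rceil> + 1 \<le> m"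
    have mpos: "real m > 0" using hm by simp
    have m4: "4*c*th \<le> real m" using hm by linarith
    have pw: "g [^]\<^bsub>G\<^esub> m = g [^]\<^bsub>G\<^esub> (int m)" by (simp add: int_pow_int)
    have low: "real m / th \<le> dist a0 (P (int m) a0)"
      using part1[OF a0A, of "int m" 0] P0 by (simp add: dist_commute)
    have "dist a0 (P (int m) a0) \<le> dist a0 x0 + dist x0 (P (int m) a0)" by (rule dist_triangle)
    also have "dist x0 (P (int m) a0) \<le> dist x0 (P (int m) x0) + dist (P (int m) x0) (P (int m) a0)"
      by (rule dist_triangle)
    finally have "real m / th - 2*c \<le> dist x0 (P (int m) x0)"
      using low P_dist[of "int m" x0 a0] unfolding c_def by (simp add: dist_commute)
    moreover have "real m / (2*th) \<le> real m / th - 2*c"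
    proof -
      have "2*c \<le> real m / (2*th)" using m4 th_ge(1) by (simp add: field_simps)
      then show ?thesis by (simp add: field_simps)
    qed
    ultimately have "real m / (2*th) \<le> dist x0 (\<phi> (g [^]\<^bsub>G\<^esub> m) x0)" unfolding P_def pw by simp
    then have "1 / (2*th) \<le> dist x0 (\<phi> (g [^]\<^bsub>G\<^esub> m) x0) / real m"
      using mpos th_ge(1) by (simp add: field_simps)
    then show "ereal (1 / (2*th)) \<le> ereal (dist x0 (\<phi> (g [^]\<^bsub>G\<^esub> m) x0) / real m)" by simp
  qed
  have "ereal (1 / (2*th)) \<le> asymp_trans_len G \<phi> g x0"
    unfolding asymp_trans_len_def by (rule le_Limsup[OF _ ev]) simp
  moreover have "ereal (1 / (2*th)) > 0" using th_ge(1) by simp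
  ultimately show ?thesis by order
qed

end

theorem mainTheorem13:
  fixes G :: "('g, 'm) monoid_scheme" and \<phi> :: "'g \<Rightarrow> 'x::metric_space \<Rightarrow> 'x"
    and \<Gamma> :: "'x rpath set" and \<mu> \<nu> \<eta> :: real and g :: 'g and A :: "'x set"
  assumes "path_system_group \<mu> \<nu> G \<phi> \<Gamma>"
    and "\<eta> \<ge> 0"
    and "quasi_convex_elem G \<phi> \<Gamma> \<eta> g A"
  shows "(\<exists>\<theta>::real. \<theta> \<ge> 1 \<and> (\<forall>a\<in>A. \<forall>m n::int.
            \<bar>real_of_int (m - n)\<bar> / \<theta> \<le> dist (\<phi> (g [^]\<^bsub>G\<^esub> m) a) (\<phi> (g [^]\<^bsub>G\<^esub> n) a) \<and>
            dist (\<phi> (g [^]\<^bsub>G\<^esub> m) a) (\<phi> (g [^]\<^bsub>G\<^esub> n) a) \<le> \<theta> * \<bar>real_of_int (m - n)\<bar>))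
         \<and> (\<forall>x0. asymp_trans_len G \<phi> g x0 > 0)"
proof -
  interpret Q: QCsetup G \<phi> \<Gamma> \<mu> \<nu> \<eta> g A using assms by unfold_locales
  show ?thesis
    using Q.th_ge(1) Q.part1 Q.part2 unfolding Q.P_def by blast
qed

end
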